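(* Let $\mathbb{F}\in\{\mathbb{R},\mathbb{C}\}$, let $\Phi=\{\varphi_i\}_{i=1}^M$ be a Parseval frame for $\mathbb{F}^N$, and suppose there is $2\leq k\leq N$ such that $v_k(\Phi_K)$ is the same for all $K\subseteq[M]$ with $|K|=k$. Then $\Phi$ is equiangular.
   Context: A Parseval frame for $\mathbb{F}^N$ is a family $\{\varphi_i\}_{i=1}^M\subseteq\mathbb{F}^N$ whose $N\times M$ matrix $\Phi$ (columns $\varphi_i$) satisfies $\Phi\Phi^*=I$. It is equiangular if $\|\varphi_i\|=\|\varphi_j\|$ for all $i,j$ and $|\langle\varphi_i,\varphi_j\rangle|$ equals a common constant for all $i\ne j$. For $K\subseteq[M]$, $\Phi_K$ is the submatrix of columns indexed by $K$, and $v_k(F)=\sqrt{\det(F^*F)}$ for an $N\times k$ matrix $F$. *)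

theory Defs
  imports "Jordan_Normal_Form.Schur_Decomposition" "Jordan_Normal_Form.DL_Submatrix"
begin

text \<open>Frames are represented as N x M matrices whose columns are the frame vectors,
  indexed by 0..<M (the paper's [M]).  The scalar field is real or complex.\<close>

definition parseval_frame :: "nat \<Rightarrow> nat \<Rightarrow> 'a :: conjugatable_field mat \<Rightarrow> bool" where
  "parseval_frame N M \<Phi> \<longleftrightarrow> \<Phi> \<in> carrier_mat N M \<and> \<Phi> * mat_adjoint \<Phi> = 1\<^sub>m N"

definition vec_norm :: "'a :: {conjugatable_field, real_normed_field} vec \<Rightarrow> real" where
  "vec_norm v = sqrt (norm (v \<bullet>c v))"

definition equiangular :: "'a :: {conjugatable_field, real_normed_field} mat \<Rightarrow> bool" where
  "equiangular \<Phi> \<longleftrightarrow>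
     (\<forall>i < dim_col \<Phi>. \<forall>j < dim_col \<Phi>. vec_norm (col \<Phi> i) = vec_norm (col \<Phi> j)) \<and>
     (\<exists>c. \<forall>i < dim_col \<Phi>. \<forall>j < dim_col \<Phi>. i \<noteq> j \<longrightarrow> norm (col \<Phi> i \<bullet>c col \<Phi> j) = c)"

definition col_submatrix :: "'a mat \<Rightarrow> nat set \<Rightarrow> 'a mat" where
  "col_submatrix \<Phi> K = submatrix \<Phi> UNIV K"

text \<open>v_k(F) = sqrt(det(F^* F)); det(F^* F) is real and nonnegative, we take its modulus.\<close>
definition vol :: "'a :: {conjugatable_field, real_normed_field} mat \<Rightarrow> real" where
  "vol F = sqrt (norm (det (mat_adjoint F * F)))"

end

theory Submission
  imports Defs
begin

lemma adj_dims[simp]: "dim_row (mat_adjoint A) = dim_col A" "dim_col (mat_adjoint A) = dim_row A"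
  unfolding mat_adjoint_def by auto

lemma adj_index[simp]: "i < dim_col A \<Longrightarrow> j < dim_row A \<Longrightarrow> mat_adjoint A $$ (i,j) = conjugate (A $$ (j,i))"
  unfolding mat_adjoint_def by (auto simp: mat_of_rows_def)

definition GL :: "'a :: comm_ring_1 mat \<Rightarrow> nat list \<Rightarrow> 'a mat" where
  "GL G xs = mat (length xs) (length xs) (\<lambda>(a,b). G $$ (xs!a, xs!b))"

lemma GL_carrier[simp]: "GL G xs \<in> carrier_mat (length xs) (length xs)"
  unfolding GL_def by auto

lemma GL_dims[simp]: "dim_row (GL G xs) = length xs" "dim_col (GL G xs) = length xs"
  unfolding GL_def by auto

lemma GL_index[simp]: "a < length xs \<Longrightarrow> b < length xs \<Longrightarrow> GL G xs $$ (a,b) = G $$ (xs!a, xs!b)"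
  unfolding GL_def by auto

lemma sign_lemma: "(-1::'a::comm_ring_1)^(a+Suc n') * (-1)^(n'+b) = - ((-1)^(a+b))"
proof -
  have sq: "(-1::'a)^n' * (-1)^n' = 1" by (simp add: power_mult_distrib[symmetric])
  have "(-1::'a)^(a+Suc n') * (-1)^(n'+b) = - (((-1)^a * (-1)^b) * ((-1)^n' * (-1)^n'))"
    unfolding power_add power_Suc by (simp only: mult_minus_left mult_1_left mult_minus_right ac_simps)
  thus ?thesis unfolding sq power_add by simp
qed

lemma expand_step:
  fixes G :: "'a :: comm_ring_1 mat" and xs :: "nat list"
  defines "n \<equiv> length xs"
  shows "det (GL G (xs @ [m])) = G $$ (m,m) * det (GL G xs)
     - (\<Sum>a<n. \<Sum>b<n. G $$ (xs!a, m) * G $$ (m, xs!b) * cofactor (GL G xs) a b)"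
proof -
  let ?H' = "GL G (xs @ [m])" let ?H = "GL G xs"
  have H': "?H' \<in> carrier_mat (Suc n) (Suc n)" unfolding n_def using GL_carrier[of G "xs@[m]"] by simp
  have "det ?H' = (\<Sum>a<Suc n. ?H' $$ (a,n) * cofactor ?H' a n)"
    by (rule laplace_expansion_column[OF H'], simp)
  also have "\<dots> = (\<Sum>a<n. ?H' $$ (a,n) * cofactor ?H' a n) + ?H' $$ (n,n) * cofactor ?H' n n"
    by simp
  also have "?H' $$ (n,n) = G $$ (m,m)" unfolding n_def by (simp add: nth_append)
  also have "mat_delete ?H' n n = ?H"
    by (rule eq_matI, auto simp: mat_delete_def n_def nth_append)
  hence "cofactor ?H' n n = det ?H" unfolding cofactor_def by (simp add: mult_2[symmetric] power_mult)
  also have "(\<Sum>a<n. ?H' $$ (a,n) * cofactor ?H' a n) =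
     (\<Sum>a<n. - (\<Sum>b<n. G $$ (xs!a, m) * G $$ (m, xs!b) * cofactor ?H a b))"
  proof (rule sum.cong[OF refl])
    fix a assume a: "a \<in> {..<n}"
    then obtain n' where nn: "n = Suc n'" by (cases n, auto)
    let ?X = "mat_delete ?H' a n"
    have X: "?X \<in> carrier_mat n n" using mat_delete_carrier[OF H'] by simp
    have "det ?X = (\<Sum>b<n. ?X $$ (n', b) * cofactor ?X n' b)"
      by (rule laplace_expansion_row[OF X], simp add: nn)
    also have "\<dots> = (\<Sum>b<n. G $$ (m, xs!b) * ((-1)^(n'+b) * det (mat_delete ?H a b)))"
    proof (rule sum.cong[OF refl])
      fix b assume b: "b \<in> {..<n}"
      have ln: "length xs = Suc n'" using nn n_def by simp
      have "?X $$ (n', b) = G $$ (m, xs!b)" using a b ln unfolding mat_delete_def n_def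
        by (auto simp: nth_append)
      moreover have "mat_delete ?X n' b = mat_delete ?H a b"
        using a b ln unfolding n_def by (intro eq_matI, auto simp: mat_delete_def nth_append)
      ultimately show "?X $$ (n', b) * cofactor ?X n' b = G $$ (m, xs!b) * ((-1)^(n'+b) * det (mat_delete ?H a b))"
        unfolding cofactor_def by simp
    qed
    finally have dX: "det ?X = \<dots>" .
    have aa: "?H' $$ (a,n) = G $$ (xs!a, m)" using a by (auto simp: n_def nth_append)
    show "?H' $$ (a,n) * cofactor ?H' a n = - (\<Sum>b<n. G $$ (xs!a, m) * G $$ (m, xs!b) * cofactor ?H a b)"
      unfolding cofactor_def dX aa sum_distrib_left sum_negf[symmetric]
    proof (rule sum.cong[OF refl])
      fix b
      have "(-1::'a)^(a+n) * (-1)^(n'+b) = - ((-1)^(a+b))" unfolding nn by (rule sign_lemma)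
      hence sg: "(-1::'a)^(a+n) * (-1)^(n'+b) = - ((-1)^(a+b))" .
      let ?d = "det (mat_delete (GL G xs) a b)"
      have "G $$ (xs ! a, m) * ((- 1) ^ (a + n) * (G $$ (m, xs ! b) * ((- 1) ^ (n' + b) * ?d)))
         = G $$ (xs ! a, m) * G $$ (m, xs ! b) * ?d * ((-1::'a)^(a+n) * (-1)^(n'+b))" by (simp only: mult_ac)
      also have "\<dots> = - (G $$ (xs ! a, m) * G $$ (m, xs ! b) * ((- 1) ^ (a + b) * ?d))"
        unfolding sg by (simp only: mult_ac mult_minus_right mult_minus_left)
      finally show "G $$ (xs ! a, m) * ((- 1) ^ (a + n) * (G $$ (m, xs ! b) * ((- 1) ^ (n' + b) * det (mat_delete (GL G xs) a b)))) =
         - (G $$ (xs ! a, m) * G $$ (m, xs ! b) * ((- 1) ^ (a + b) * det (mat_delete (GL G xs) a b)))" .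
    qed
  qed
  finally show ?thesis by (simp add: sum_negf)
qed

lemma swap3: "(\<Sum>m\<in>A. \<Sum>a\<in>B. \<Sum>b\<in>C. f m a b) = (\<Sum>a\<in>B. \<Sum>b\<in>C. \<Sum>m\<in>A. (f m a b :: 'a :: comm_monoid_add))"
  by (subst sum.swap, rule sum.cong[OF refl], rule sum.swap)

lemma one_step:
  fixes G :: "'a::comm_ring_1 mat"
  assumes idem: "\<And>a b. a < M \<Longrightarrow> b < M \<Longrightarrow> (\<Sum>m<M. G$$(a,m) * G$$(m,b)) = G$$(a,b)"
  and tr: "(\<Sum>m<M. G$$(m,m)) = of_nat N"
  and xs: "set xs \<subseteq> {..<M}"
  shows "(\<Sum>m<M. det (GL G (xs@[m]))) = (of_nat N - of_nat (length xs)) * det (GL G xs)"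
proof -
  let ?n = "length xs"  let ?H = "GL G xs"
  have xsM: "\<And>i. i < length xs \<Longrightarrow> xs!i < M" using xs nth_mem by blast
  have "(\<Sum>m<M. det (GL G (xs@[m]))) = (\<Sum>m<M. G$$(m,m) * det ?H) - (\<Sum>m<M. \<Sum>a<?n. \<Sum>b<?n. G $$ (xs!a, m) * G $$ (m, xs!b) * cofactor ?H a b)"
    unfolding expand_step by (simp add: sum_subtractf)
  also have "(\<Sum>m<M. G$$(m,m) * det ?H) = of_nat N * det ?H" by (simp add: sum_distrib_right[symmetric] tr)
  also have "(\<Sum>m<M. \<Sum>a<?n. \<Sum>b<?n. G $$ (xs!a, m) * G $$ (m, xs!b) * cofactor ?H a b)
     = (\<Sum>a<?n. \<Sum>b<?n. (\<Sum>m<M. G $$ (xs!a, m) * G $$ (m, xs!b)) * cofactor ?H a b)"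
    by (subst swap3) (simp only: sum_distrib_right)
  also have "\<dots> = (\<Sum>a<?n. \<Sum>b<?n. ?H $$ (a,b) * cofactor ?H a b)"
    using idem xsM by (intro sum.cong refl, auto)
  also have "\<dots> = (\<Sum>a<?n. det ?H)"
    by (intro sum.cong refl, rule laplace_expansion_row[symmetric], auto)
  also have "\<dots> = of_nat ?n * det ?H" by simp
  finally show ?thesis by (simp add: algebra_simps)
qed

fun Tsum :: "(nat list \<Rightarrow> 'a::comm_ring_1) \<Rightarrow> nat \<Rightarrow> nat list \<Rightarrow> nat \<Rightarrow> 'a" where
  "Tsum f M xs 0 = f xs"
| "Tsum f M xs (Suc r) = (\<Sum>m<M. Tsum f M (xs@[m]) r)"

lemma Tsum_step:
  assumes step: "\<And>ys. set ys \<subseteq> {..<M} \<Longrightarrow> (\<Sum>m<M. f (ys@[m])) = (of_nat N - of_nat (length ys)) * f ys"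
  shows "set xs \<subseteq> {..<M} \<Longrightarrow> Tsum f M xs r = (\<Prod>t<r. (of_nat N - of_nat (length xs) - of_nat t)) * f xs"
proof (induction r arbitrary: xs)
  case 0
  then show ?case by simp
next
  case (Suc r)
  have "Tsum f M xs (Suc r) = (\<Sum>m<M. (\<Prod>t<r. (of_nat N - of_nat (Suc (length xs)) - of_nat t)) * f (xs@[m]))"
    using Suc by (auto intro!: sum.cong)
  also have "\<dots> = (\<Prod>t<r. (of_nat N - of_nat (Suc (length xs)) - of_nat t)) * ((of_nat N - of_nat (length xs)) * f xs)"
    by (simp add: sum_distrib_left[symmetric] step Suc.prems)
  also have "\<dots> = (\<Prod>t<Suc r. (of_nat N - of_nat (length xs) - of_nat t)) * f xs"
    unfolding prod.lessThan_Suc_shift by (simp add: algebra_simps)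
  finally show ?case .
qed

lemma Tsum_count:
  assumes dist: "\<And>zs. set zs \<subseteq> {..<M} \<Longrightarrow> length zs = k \<Longrightarrow> distinct zs \<Longrightarrow> f zs = c"
    and nd: "\<And>zs. set zs \<subseteq> {..<M} \<Longrightarrow> length zs = k \<Longrightarrow> \<not> distinct zs \<Longrightarrow> f zs = 0"
  shows "set xs \<subseteq> {..<M} \<Longrightarrow> length xs + r = k \<Longrightarrow>
     Tsum f M xs r = (if distinct xs then c * of_nat (\<Prod>t<r. (M - length xs - t)) else 0)"
proof (induction r arbitrary: xs)
  case 0
  then show ?case using dist nd by simp
next
  case (Suc r)
  have "Tsum f M xs (Suc r) = (\<Sum>m<M. (if distinct (xs@[m]) then c * of_nat (\<Prod>t<r. (M - Suc (length xs) - t)) else 0))"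
    using Suc by (auto intro!: sum.cong)
  also have "\<dots> = (if distinct xs then c * of_nat (\<Prod>t<Suc r. (M - length xs - t)) else 0)"
  proof (cases "distinct xs")
    case True
    have "(\<Sum>m<M. (if distinct (xs@[m]) then c * of_nat (\<Prod>t<r. (M - Suc (length xs) - t)) else 0))
        = (\<Sum>m\<in>{..<M} - set xs. c * of_nat (\<Prod>t<r. (M - Suc (length xs) - t)))"
      using True by (simp add: sum.If_cases Diff_eq Compl_eq)
    also have "\<dots> = of_nat (M - length xs) * (c * of_nat (\<Prod>t<r. (M - Suc (length xs) - t)))"
      using True Suc.prems by (simp add: card_Diff_subset distinct_card)
    also have "\<dots> = c * of_nat (\<Prod>t<Suc r. (M - length xs - t))"
      unfolding prod.lessThan_Suc_shift of_nat_mult by (simp add: ac_simps)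
    finally show ?thesis using True by simp
  next
    case False
    then show ?thesis by simp
  qed
  finally show ?case .
qed

lemma Tsum_nonneg:
  fixes f :: "nat list \<Rightarrow> 'a::{comm_ring_1, ordered_comm_monoid_add}"
  assumes nn: "\<And>zs. set zs \<subseteq> {..<M} \<Longrightarrow> length zs = k \<Longrightarrow> 0 \<le> f zs"
  shows "set xs \<subseteq> {..<M} \<Longrightarrow> length xs + r = k \<Longrightarrow> 0 \<le> Tsum f M xs r"
proof (induction r arbitrary: xs)
  case 0
  then show ?case using nn by simp
next
  case (Suc r)
  then show ?case by (auto intro!: sum_nonneg)
qed

lemma det_perm_both:
  assumes A: "A \<in> carrier_mat n n" and p: "p permutes {0..<n}"
  shows "det (mat n n (\<lambda>(i,j). A $$ (p i, p j))) = det A"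
proof -
  let ?B = "mat n n (\<lambda>(i,j). A $$ (i, p j))"
  have pn: "\<And>i. i < n \<Longrightarrow> p i < n" using p permutes_in_image by fastforce
  have B: "?B \<in> carrier_mat n n" by simp
  have "mat n n (\<lambda>(i,j). A $$ (p i, p j)) = mat n n (\<lambda>(i,j). ?B $$ (p i, j))"
    using pn by (intro eq_matI, auto)
  hence "det (mat n n (\<lambda>(i,j). A $$ (p i, p j))) = signof p * det ?B"
    using det_permute_rows[OF B p] by simp
  also have "det ?B = det (transpose_mat ?B)" using det_transpose[OF B] by simp
  also have "transpose_mat ?B = mat n n (\<lambda>(i,j). transpose_mat A $$ (p i, j))"
    using pn A by (intro eq_matI, auto)
  also have "det \<dots> = signof p * det (transpose_mat A)"
    by (rule det_permute_rows[OF _ p], use A in simp)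
  also have "det (transpose_mat A) = det A" using det_transpose[OF A] .
  finally show ?thesis by (simp add: sign_def)
qed

lemma det2: "det (mat 2 2 h) = h (0,0) * h (1,1) - h (0,1) * (h (1,0) :: 'a :: comm_ring_1)"
proof -
  have C: "mat 2 2 h \<in> carrier_mat 2 2" by simp
  have "det (mat 2 2 h) = (\<Sum>j<2. mat 2 2 h $$ (0,j) * cofactor (mat 2 2 h) 0 j)"
    by (rule laplace_expansion_row[OF C], simp)
  also have "\<dots> = h (0,0) * det (mat_delete (mat 2 2 h) 0 0) - h (0,1) * det (mat_delete (mat 2 2 h) 0 1)"
    by (simp add: numeral_2_eq_2 cofactor_def)
  also have "det (mat_delete (mat 2 2 h) 0 0) = h (1,1)"
    by (subst det_single, auto simp: mat_delete_def)
  also have "det (mat_delete (mat 2 2 h) 0 1) = h (1,0)"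
    by (subst det_single, auto simp: mat_delete_def)
  finally show ?thesis .
qed

lemma conj_one: "conjugate (1 :: 'a :: conjugatable_field) = 1"
proof -
  have "conjugate (1::'a) * conjugate 1 = conjugate 1" by (metis conjugate_dist_mul mult_1)
  moreover have "conjugate (1::'a) \<noteq> 0" by simp
  ultimately show ?thesis by (metis mult_cancel_right1)
qed

lemma conj_hom: "comm_ring_hom (conjugate :: 'a :: conjugatable_field \<Rightarrow> 'a)"
  by (unfold_locales, auto simp: conj_one conjugate_dist_mul conjugate_dist_add)

lemma det_adjoint: assumes B: "(B :: 'a :: conjugatable_field mat) \<in> carrier_mat n n"
  shows "det (mat_adjoint B) = conjugate (det B)"
proof -
  have "mat_adjoint B = transpose_mat (map_mat conjugate B)"
    using B by (intro eq_matI, auto)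
  hence "det (mat_adjoint B) = det (map_mat conjugate B)"
    using det_transpose[of "map_mat conjugate B" n] B by simp
  also have "\<dots> = conjugate (det B)" by (rule comm_ring_hom.hom_det[OF conj_hom])
  finally show ?thesis .
qed

lemma G_index: assumes "\<Phi> \<in> carrier_mat N M" "i < M" "j < M"
  shows "(mat_adjoint \<Phi> * \<Phi>) $$ (i,j) = (\<Sum>r\<in>{0..<N}. conjugate (\<Phi>$$(r,i)) * \<Phi>$$(r,j))"
  using assms by (auto simp: scalar_prod_def intro!: sum.cong)

lemma G_herm: assumes "\<Phi> \<in> carrier_mat N M" "i < M" "j < M"
  shows "(mat_adjoint \<Phi> * \<Phi>) $$ (j,i) = conjugate ((mat_adjoint \<Phi> * \<Phi>) $$ (i,j))"
  unfolding G_index[OF assms] G_index[OF assms(1,3,2)] by (simp add: sum_conjugate conjugate_dist_mul mult.commute)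

lemma G_cprod: assumes "\<Phi> \<in> carrier_mat N M" "i < M" "j < M"
  shows "col \<Phi> i \<bullet>c col \<Phi> j = (mat_adjoint \<Phi> * \<Phi>) $$ (j,i)"
  using assms by (auto simp: G_index scalar_prod_def mult.commute intro!: sum.cong)

lemma G_idem: assumes P: "\<Phi> \<in> carrier_mat N M" and I: "\<Phi> * mat_adjoint \<Phi> = 1\<^sub>m N"
  and a: "a < M" and b: "b < M"
  shows "(\<Sum>m<M. (mat_adjoint \<Phi> * \<Phi>)$$(a,m) * (mat_adjoint \<Phi> * \<Phi>)$$(m,b)) = (mat_adjoint \<Phi> * \<Phi>)$$(a,b)"
proof -
  let ?A = "mat_adjoint \<Phi>"
  have A: "?A \<in> carrier_mat M N" using P by auto
  have "?A * \<Phi> * (?A * \<Phi>) = ?A * (\<Phi> * (?A * \<Phi>))"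
    by (rule assoc_mult_mat[OF A P mult_carrier_mat[OF A P]])
  also have "\<Phi> * (?A * \<Phi>) = \<Phi> * ?A * \<Phi>" by (rule assoc_mult_mat[symmetric, OF P A P])
  also have "?A * (\<Phi> * ?A * \<Phi>) = ?A * \<Phi>" unfolding I using A P by simp
  finally have eq: "?A * \<Phi> * (?A * \<Phi>) = ?A * \<Phi>" .
  have "(?A * \<Phi> * (?A * \<Phi>)) $$ (a,b) = (\<Sum>m<M. (?A * \<Phi>)$$(a,m) * (?A * \<Phi>)$$(m,b))"
    using A P a b by (auto simp: scalar_prod_def lessThan_atLeast0 intro!: sum.cong)
  thus ?thesis unfolding eq by simp
qed

lemma G_trace: assumes P: "\<Phi> \<in> carrier_mat N M" and I: "\<Phi> * mat_adjoint \<Phi> = 1\<^sub>m N"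
  shows "(\<Sum>m<M. (mat_adjoint \<Phi> * \<Phi>)$$(m,m)) = of_nat N"
proof -
  have "(\<Sum>m<M. (mat_adjoint \<Phi> * \<Phi>)$$(m,m)) = (\<Sum>m<M. \<Sum>r\<in>{0..<N}. conjugate (\<Phi>$$(r,m)) * \<Phi>$$(r,m))"
    by (intro sum.cong refl, rule G_index[OF P], auto)
  also have "\<dots> = (\<Sum>r\<in>{0..<N}. \<Sum>m<M. \<Phi>$$(r,m) * conjugate (\<Phi>$$(r,m)))"
    by (subst sum.swap, simp add: mult.commute)
  also have "\<dots> = (\<Sum>r\<in>{0..<N}. (\<Phi> * mat_adjoint \<Phi>) $$ (r,r))"
    using P by (intro sum.cong refl, auto simp: scalar_prod_def lessThan_atLeast0 intro!: sum.cong)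
  also have "\<dots> = of_nat N" unfolding I by simp
  finally show ?thesis .
qed

lemma sub_gram: assumes P: "\<Phi> \<in> carrier_mat N M" and K: "K \<subseteq> {0..<M}"
  shows "mat_adjoint (col_submatrix \<Phi> K) * col_submatrix \<Phi> K
     = mat (card K) (card K) (\<lambda>(a,b). (mat_adjoint \<Phi> * \<Phi>) $$ (pick K a, pick K b))"
proof -
  have c1: "{i. i < N \<and> i \<in> UNIV} = {0..<N}" by auto
  have c2: "{j. j < M \<and> j \<in> K} = K" using K by auto
  have S: "col_submatrix \<Phi> K \<in> carrier_mat N (card K)"
    unfolding col_submatrix_def using P by (intro carrier_matI, simp_all add: dim_submatrix c1 c2)
  have pk: "\<And>a. a < card K \<Longrightarrow> pick K a < M"
  proof -
    fix a assume "a < card K" hence "pick K a \<in> K" by (rule pick_in_set_le)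
    thus "pick K a < M" using K by auto
  qed
  have ix: "\<And>r a. r < N \<Longrightarrow> a < card K \<Longrightarrow> col_submatrix \<Phi> K $$ (r,a) = \<Phi> $$ (r, pick K a)"
    unfolding col_submatrix_def using P by (subst submatrix_index, auto simp: c1 c2 pick_UNIV)
  show ?thesis
    using S P pk by (intro eq_matI, auto simp: G_index scalar_prod_def ix intro!: sum.cong)
qed

lemma GL_perm: fixes G :: "'a :: comm_ring_1 mat"
  assumes d: "distinct zs"
  shows "det (GL G zs) = det (mat (length zs) (length zs) (\<lambda>(a,b). G $$ (pick (set zs) a, pick (set zs) b)))"
proof -
  define K where "K = set zs"
  define k where "k = length zs"
  have ck: "card K = k" unfolding K_def k_def using distinct_card[OF d] .
  have inj: "inj_on (pick K) {0..<k}"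
    by (rule inj_onI, metis atLeastLessThan_iff ck nat_neq_iff pick_mono_le)
  have sub: "pick K ` {0..<k} \<subseteq> K" using pick_in_set_le ck by auto
  have img: "pick K ` {0..<k} = K"
    by (rule card_subset_eq[OF _ sub], simp add: K_def, simp add: card_image[OF inj] ck)
  have bp: "bij_betw (pick K) {0..<k} K" using inj img unfolding bij_betw_def by auto
  define \<sigma> where "\<sigma> = (\<lambda>a. if a < k then the_inv_into {0..<k} (pick K) (zs!a) else a)"
  have bn: "bij_betw ((!) zs) {0..<k} K" by (rule bij_betw_nth[OF d], auto simp: k_def K_def)
  have "bij_betw (the_inv_into {0..<k} (pick K) \<circ> (!) zs) {0..<k} {0..<k}"
    by (rule bij_betw_trans[OF bn], rule bij_betw_the_inv_into[OF bp])
  hence "bij_betw \<sigma> {0..<k} {0..<k}"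
    by (rule bij_betw_cong[THEN iffD1, rotated], auto simp: \<sigma>_def)
  hence perm: "\<sigma> permutes {0..<k}" by (rule bij_imp_permutes, auto simp: \<sigma>_def)
  have sk: "\<And>a. a < k \<Longrightarrow> \<sigma> a < k" using perm permutes_in_image by fastforce
  have ps: "\<And>a. a < k \<Longrightarrow> pick K (\<sigma> a) = zs!a"
  proof -
    fix a assume a: "a < k"
    have "zs!a \<in> pick K ` {0..<k}" using img a by (simp add: K_def k_def)
    thus "pick K (\<sigma> a) = zs!a" using a unfolding \<sigma>_def by (simp add: f_the_inv_into_f[OF inj])
  qed
  let ?Q = "mat k k (\<lambda>(a,b). G $$ (pick K a, pick K b))"
  have "GL G zs = mat k k (\<lambda>(i,j). ?Q $$ (\<sigma> i, \<sigma> j))"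
    unfolding GL_def k_def[symmetric] using sk ps by (intro eq_matI, auto)
  hence "det (GL G zs) = det ?Q" using det_perm_both[OF _ perm, of ?Q] by simp
  thus ?thesis unfolding K_def k_def .
qed

lemma GL_square_nonneg:
  fixes \<Phi> :: "'a :: conjugatable_ordered_field mat"
  assumes P: "\<Phi> \<in> carrier_mat N M" and zs: "set zs \<subseteq> {..<M}" and l: "length zs = N"
  shows "0 \<le> det (GL (mat_adjoint \<Phi> * \<Phi>) zs)"
proof -
  let ?B = "mat N N (\<lambda>(r,a). \<Phi>$$(r, zs!a))"
  have B: "?B \<in> carrier_mat N N" by simp
  have zM: "\<And>i. i < N \<Longrightarrow> zs!i < M" using zs l nth_mem by fastforce  
  have eq: "GL (mat_adjoint \<Phi> * \<Phi>) zs = mat_adjoint ?B * ?B"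
  proof (rule eq_matI)
    fix i j assume "i < dim_row (mat_adjoint ?B * ?B)" "j < dim_col (mat_adjoint ?B * ?B)"
    hence ij: "i < N" "j < N" by auto
    show "GL (mat_adjoint \<Phi> * \<Phi>) zs $$ (i, j) = (mat_adjoint ?B * ?B) $$ (i, j)"
      using ij l by (simp add: G_index[OF P zM zM] scalar_prod_def)
  qed (auto simp: l)
  have AB: "mat_adjoint ?B \<in> carrier_mat N N" by (rule carrier_matI; simp only: adj_dims dim_row_mat dim_col_mat)
  have "det (GL (mat_adjoint \<Phi> * \<Phi>) zs) = det (mat_adjoint ?B * ?B)" unfolding eq ..
  also have "\<dots> = det (mat_adjoint ?B) * det ?B" by (rule det_mult[OF AB B])
  also have "\<dots> = conjugate (det ?B) * det ?B" unfolding det_adjoint[OF B] ..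
  also have "\<dots> = det ?B * conjugate (det ?B)" by (rule mult.commute)
  finally have eq2: "det (GL (mat_adjoint \<Phi> * \<Phi>) zs) = det ?B * conjugate (det ?B)" .
  show ?thesis unfolding eq2 by (rule conjugate_square_positive)
qed
lemma GL_nondistinct:
  fixes G :: "'a :: comm_ring_1 mat"
  assumes "\<not> distinct zs" shows "det (GL G zs) = 0"
proof -
  from assms obtain i j where ij: "i < length zs" "j < length zs" "i \<noteq> j" "zs!i = zs!j"
    unfolding distinct_conv_nth by auto
  show ?thesis
    by (rule det_identical_rows[OF GL_carrier ij(3) ij(1) ij(2)], use ij in auto)
qed

lemma prod_conv:
  fixes N j r :: nat
  assumes "j + r \<le> N"
  shows "(\<Prod>t<r. (of_nat N - of_nat j - of_nat t) :: 'a::comm_ring_1) = of_nat (\<Prod>t<r. (N - j - t))"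
  unfolding of_nat_prod using assms by (intro prod.cong refl, auto)

lemma prod_pos_nat:
  fixes N j r :: nat
  assumes "j + r \<le> N"
  shows "0 < (\<Prod>t<r. (N - j - t))"
  using assms by simp

lemma main_generic:
  fixes \<Phi> :: "'a::{conjugatable_ordered_field, real_normed_field} mat"
  assumes A1: "\<And>x y::'a. 0 \<le> x \<Longrightarrow> 0 \<le> y \<Longrightarrow> norm x = norm y \<Longrightarrow> x = y"
  and A2: "\<And>x::'a. norm (conjugate x) = norm x"
  and A3: "\<And>(x::'a) n. 0 < n \<Longrightarrow> 0 \<le> of_nat n * x \<Longrightarrow> 0 \<le> x"
  and PF: "parseval_frame N M \<Phi>" and k2: "2 \<le> k" and kN: "k \<le> N"
  and V: "\<exists>c. \<forall>K \<subseteq> {0..<M}. card K = k \<longrightarrow> vol (col_submatrix \<Phi> K) = c"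
  shows "equiangular \<Phi>"
proof -
  from PF have P: "\<Phi> \<in> carrier_mat N M" and I: "\<Phi> * mat_adjoint \<Phi> = 1\<^sub>m N"
    unfolding parseval_frame_def by auto
  define G where "G = mat_adjoint \<Phi> * \<Phi>"
  define f where "f = (\<lambda>xs. det (GL G xs))"
  have idem: "\<And>a b. a < M \<Longrightarrow> b < M \<Longrightarrow> (\<Sum>m<M. G$$(a,m) * G$$(m,b)) = G$$(a,b)"
    unfolding G_def by (rule G_idem[OF P I])
  have tr: "(\<Sum>m<M. G$$(m,m)) = of_nat N" unfolding G_def by (rule G_trace[OF P I])
  have OS: "\<And>ys. set ys \<subseteq> {..<M} \<Longrightarrow> (\<Sum>m<M. f (ys@[m])) = (of_nat N - of_nat (length ys)) * f ys"
    unfolding f_def by (rule one_step[OF idem tr])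
  have ND: "\<And>zs. \<not> distinct zs \<Longrightarrow> f zs = 0" unfolding f_def by (rule GL_nondistinct)
  have NN: "0 \<le> f xs" if xs: "set xs \<subseteq> {..<M}" and l: "length xs \<le> N" for xs
  proof -
    define r where "r = N - length xs"
    have lr: "length xs + r \<le> N" unfolding r_def using l by simp
    have "Tsum f M xs r = (\<Prod>t<r. (of_nat N - of_nat (length xs) - of_nat t)) * f xs"
      by (rule Tsum_step[OF OS xs])
    also have "\<dots> = of_nat (\<Prod>t<r. (N - length xs - t)) * f xs" unfolding prod_conv[OF lr] ..
    finally have eq: "Tsum f M xs r = of_nat (\<Prod>t<r. (N - length xs - t)) * f xs" .
    have "0 \<le> Tsum f M xs r"
    proof (rule Tsum_nonneg[where k=N])
      fix zs assume "set zs \<subseteq> {..<M}" "length zs = N"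
      thus "0 \<le> f zs" unfolding f_def G_def by (rule GL_square_nonneg[OF P])
    qed (use xs lr r_def l in auto)
    thus ?thesis unfolding eq by (rule A3[OF prod_pos_nat[OF lr]])
  qed
  have DZ: "f zs = det (mat_adjoint (col_submatrix \<Phi> (set zs)) * col_submatrix \<Phi> (set zs))"
    if d: "distinct zs" and zs: "set zs \<subseteq> {..<M}" for zs
  proof -
    have "set zs \<subseteq> {0..<M}" using zs by auto
    from sub_gram[OF P this] show ?thesis
      unfolding f_def GL_perm[OF d] distinct_card[OF d] G_def by simp
  qed
  obtain c where c: "\<And>K. K \<subseteq> {0..<M} \<Longrightarrow> card K = k \<Longrightarrow> vol (col_submatrix \<Phi> K) = c"
    using V by auto
  have NRM: "norm (f zs) = c^2" if d: "distinct zs" and zs: "set zs \<subseteq> {..<M}" and l: "length zs = k" for zs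
  proof -
    have "vol (col_submatrix \<Phi> (set zs)) = c"
      by (rule c, use zs in auto, simp add: distinct_card[OF d] l)
    hence "sqrt (norm (f zs)) = c" unfolding vol_def DZ[OF d zs] .
    thus ?thesis using norm_ge_zero[of "f zs"] by auto
  qed
  define e where "e = (if k \<le> M then f [0..<k] else 0)"
  have CONST: "f zs = e" if d: "distinct zs" and zs: "set zs \<subseteq> {..<M}" and l: "length zs = k" for zs
  proof -
    have "k \<le> M" using card_mono[OF _ zs] distinct_card[OF d] l by auto
    hence e: "e = f [0..<k]" unfolding e_def by simp
    have z0: "set [0..<k] \<subseteq> {..<M}" using \<open>k \<le> M\<close> by auto
    have n1: "0 \<le> f zs" using NN[OF zs] l kN by simp
    have n2: "0 \<le> f [0..<k]" using NN[OF z0] kN by simp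
    have n3: "norm (f zs) = norm (f [0..<k])" using NRM[OF d zs l] NRM[OF _ z0] by simp
    show ?thesis unfolding e by (rule A1[OF n1 n2 n3])
  qed
  define PN where "PN = (\<Prod>t<k-2. (N - 2 - t))"
  define PM where "PM = (\<Prod>t<k-2. (M - 2 - t))"
  define d where "d = e * of_nat PM / of_nat PN"
  have PN: "0 < PN" unfolding PN_def by (rule prod_pos_nat, use k2 kN in simp)
  have PAIR: "f [a,b] = d" if ab: "a < M" "b < M" "a \<noteq> b" for a b
  proof -
    have s: "set [a,b] \<subseteq> {..<M}" using ab by auto
    have lr: "length [a,b] + (k - 2) \<le> N" using k2 kN by simp
    have "Tsum f M [a,b] (k-2) = (\<Prod>t<k-2. (of_nat N - of_nat (length [a,b]) - of_nat t)) * f [a,b]"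
      by (rule Tsum_step[OF OS s])
    also have "\<dots> = of_nat PN * f [a,b]" unfolding prod_conv[OF lr] PN_def by simp
    finally have e1: "Tsum f M [a,b] (k-2) = of_nat PN * f [a,b]" .
    have "Tsum f M [a,b] (k-2) = (if distinct [a,b] then e * of_nat (\<Prod>t<k-2. (M - length [a,b] - t)) else 0)"
      using ab k2 s by (intro Tsum_count[where k=k]) (auto intro: CONST ND)
    hence e2: "Tsum f M [a,b] (k-2) = e * of_nat PM" using ab unfolding PM_def by simp
    have "of_nat PN \<noteq> (0::'a)" using PN by simp
    thus ?thesis using e1 e2 unfolding d_def by (simp add: field_simps)
  qed
  have N1: "(of_nat N - 1 :: 'a) \<noteq> 0"
  proof
    assume "(of_nat N - 1 :: 'a) = 0"
    hence "(of_nat N :: 'a) = of_nat 1" by simp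
    hence "N = 1" by (rule of_nat_eq_iff[THEN iffD1])
    thus False using k2 kN by simp
  qed
  define g where "g = (of_nat M - 1) * d / (of_nat N - 1)"
  have DIAG: "G $$ (a,a) = g" if a: "a < M" for a
  proof -
    have s: "set [a] \<subseteq> {..<M}" using a by auto
    have "(\<Sum>m<M. f ([a]@[m])) = (of_nat N - 1) * f [a]" using OS[OF s] by simp
    also have "f [a] = G $$ (a,a)" unfolding f_def
      using det_single[of "GL G [a]"] GL_carrier[of G "[a]"] by (simp add: One_nat_def)
    also have "(\<Sum>m<M. f ([a]@[m])) = f [a,a] + (\<Sum>m\<in>{..<M} - {a}. f [a,m])"
      using a by (simp add: sum.remove[of "{..<M}" a])
    also have "f [a,a] = 0" by (rule ND, simp)
    also have "(\<Sum>m\<in>{..<M} - {a}. f [a,m]) = (\<Sum>m\<in>{..<M} - {a}. d)"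
      using a by (intro sum.cong refl PAIR, auto)
    also have "\<dots> = of_nat (M - 1) * d" using a by simp
    also have "(of_nat (M - 1) :: 'a) = of_nat M - 1" using a by (simp add: of_nat_diff)
    finally have "(of_nat M - 1) * d = (of_nat N - 1) * G $$ (a,a)" by simp
    thus ?thesis unfolding g_def using N1 by (simp add: field_simps)
  qed
  have TWO: "G $$ (a,b) * G $$ (b,a) = g * g - d" if ab: "a < M" "b < M" "a \<noteq> b" for a b
  proof -
    have "f [a,b] = G $$ (a,a) * G $$ (b,b) - G $$ (a,b) * G $$ (b,a)"
    proof -
      have l2: "length [a,b] = 2" by simp
      show ?thesis unfolding f_def GL_def l2 det2 by simp
    qed
    thus ?thesis using PAIR[OF ab] DIAG[OF ab(1)] DIAG[OF ab(2)] by simp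
  qed
  have dimc: "dim_col \<Phi> = M" using P by simp
  show ?thesis unfolding equiangular_def dimc
  proof (intro conjI allI impI exI)
    fix i j assume i: "i < M" and j: "j < M"
    show "vec_norm (col \<Phi> i) = vec_norm (col \<Phi> j)"
      unfolding vec_norm_def G_cprod[OF P i i] G_cprod[OF P j j] G_def[symmetric] DIAG[OF i] DIAG[OF j] ..
  next
    fix i j assume i: "i < M" and j: "j < M" and ij: "i \<noteq> j"
    have h: "G $$ (i,j) = conjugate (G $$ (j,i))" unfolding G_def by (rule G_herm[OF P j i])
    have "norm (G $$ (j,i)) ^ 2 = norm (G $$ (j,i)) * norm (G $$ (i,j))"
      unfolding h A2 by (simp add: power2_eq_square)
    also have "\<dots> = norm (g * g - d)" unfolding TWO[OF j i ij[symmetric], symmetric] norm_mult ..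
    finally have "norm (G $$ (j,i)) = sqrt (norm (g * g - d))"
      by (metis norm_ge_zero real_sqrt_abs abs_of_nonneg real_sqrt_power)
    thus "norm (col \<Phi> i \<bullet>c col \<Phi> j) = sqrt (norm (g * g - d))"
      unfolding G_cprod[OF P i j] G_def[symmetric] .
  qed
qed

lemma real_case:
  "\<forall>(N::nat) (M::nat) (k::nat) (\<Phi> :: real mat).
            parseval_frame N M \<Phi> \<longrightarrow> 2 \<le> k \<longrightarrow> k \<le> N \<longrightarrow>
            (\<exists>c. \<forall>K \<subseteq> {0..<M}. card K = k \<longrightarrow> vol (col_submatrix \<Phi> K) = c) \<longrightarrow>
            equiangular \<Phi>"
proof (intro allI impI)
  fix N M k :: nat and \<Phi> :: "real mat"
  assume "parseval_frame N M \<Phi>" "2 \<le> k" "k \<le> N"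
    "\<exists>c. \<forall>K \<subseteq> {0..<M}. card K = k \<longrightarrow> vol (col_submatrix \<Phi> K) = c"
  thus "equiangular \<Phi>"
    by (intro main_generic[where \<Phi>=\<Phi> and N=N and M=M and k=k]) (auto simp: zero_le_mult_iff)
qed

lemma complex_case:
  "\<forall>(N::nat) (M::nat) (k::nat) (\<Phi> :: complex mat).
            parseval_frame N M \<Phi> \<longrightarrow> 2 \<le> k \<longrightarrow> k \<le> N \<longrightarrow>
            (\<exists>c. \<forall>K \<subseteq> {0..<M}. card K = k \<longrightarrow> vol (col_submatrix \<Phi> K) = c) \<longrightarrow>
            equiangular \<Phi>"
proof (intro allI impI)
  fix N M k :: nat and \<Phi> :: "complex mat"
  assume a: "parseval_frame N M \<Phi>" "2 \<le> k" "k \<le> N"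
    "\<exists>c. \<forall>K \<subseteq> {0..<M}. card K = k \<longrightarrow> vol (col_submatrix \<Phi> K) = c"
  have A1: "x = y" if "0 \<le> x" "0 \<le> y" "norm x = norm y" for x y :: complex
  proof -
    have "Im x = 0" "Im y = 0" "Re x \<ge> 0" "Re y \<ge> 0" using that by (auto simp: less_eq_complex_def)
    moreover have "norm x = Re x" "norm y = Re y" using calculation
      by (simp_all add: cmod_def)
    ultimately show ?thesis using that(3) by (simp add: complex_eqI)
  qed
  have A3: "0 \<le> x" if "0 < n" "0 \<le> of_nat n * x" for x :: complex and n :: nat
    using that by (auto simp: less_eq_complex_def zero_le_mult_iff)
  show "equiangular \<Phi>"
    by (rule main_generic[OF A1 _ A3 a], auto)
qed

theorem corollary10:
  shows "(\<forall>(N::nat) (M::nat) (k::nat) (\<Phi> :: real mat).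
            parseval_frame N M \<Phi> \<longrightarrow> 2 \<le> k \<longrightarrow> k \<le> N \<longrightarrow>
            (\<exists>c. \<forall>K \<subseteq> {0..<M}. card K = k \<longrightarrow> vol (col_submatrix \<Phi> K) = c) \<longrightarrow>
            equiangular \<Phi>)
       \<and> (\<forall>(N::nat) (M::nat) (k::nat) (\<Phi> :: complex mat).
            parseval_frame N M \<Phi> \<longrightarrow> 2 \<le> k \<longrightarrow> k \<le> N \<longrightarrow>
            (\<exists>c. \<forall>K \<subseteq> {0..<M}. card K = k \<longrightarrow> vol (col_submatrix \<Phi> K) = c) \<longrightarrow>
            equiangular \<Phi>)"
  using real_case complex_case by blast

end
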